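(* Let $U$ be a finite ground set, $p$ a positive integer with $p\le |U|$, $\lambda\ge 0$, $d$ an $\alpha$-relaxed semi-metric distance on $U$ (for some $\alpha\ge 1$), and $f:2^U\to\mathbb{R}_{\ge 0}$ a non-negative monotone submodular set function. Consider the problem of finding $S\subseteq U$ with $|S|=p$ maximizing $\phi(S)=f(S)+\lambda\, d(S)$. Let $G$ be the set returned by the following greedy algorithm: start with $S=\emptyset$; while $|S|<p$, pick $u\in U\setminus S$ maximizing $\phi'_u(S)=\tfrac12\big(f(S\cup\{u\})-f(S)\big)+\lambda\sum_{v\in S}d(u,v)$ (ties broken arbitrarily) and set $S=S\cup\{u\}$. Then $$\phi(G)\;\ge\;\frac{1}{2\alpha}\,\phi(O),$$ where $O$ is an optimal solution, i.e. $\phi(O)=\max\{\phi(S): S\subseteq U,\ |S|=p\}$.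
   Context: An $\alpha$-relaxed semi-metric distance on $U$ (with $\alpha\ge 1$) is a function $d:U\times U\to\mathbb{R}_{\ge 0}$ with $d(u,v)=d(v,u)$, $d(u,u)=0$, satisfying $d(u,v)\le \alpha\,(d(v,w)+d(w,u))$ for all $u,v,w\in U$. For $S\subseteq U$, $d(S)=\sum_{\{u,v\}\subseteq S,\,u\ne v} d(u,v)$. A set function $f$ is monotone if $f(S)\le f(T)$ whenever $S\subseteq T$, and submodular if $f(S\cup\{u\})-f(S)\ge f(T\cup\{u\})-f(T)$ whenever $S\subseteq T$ and $u\notin T$. *)

theory Defs
  imports Complex_Main
begin

definition relaxed_semimetric :: "real \<Rightarrow> 'a set \<Rightarrow> ('a \<Rightarrow> 'a \<Rightarrow> real) \<Rightarrow> bool" where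
  "relaxed_semimetric \<alpha> U d \<longleftrightarrow> \<alpha> \<ge> 1 \<and>
     (\<forall>u\<in>U. \<forall>v\<in>U. d u v \<ge> 0 \<and> d u v = d v u) \<and>
     (\<forall>u\<in>U. d u u = 0) \<and>
     (\<forall>u\<in>U. \<forall>v\<in>U. \<forall>w\<in>U. d u v \<le> \<alpha> * (d v w + d w u))"

(* d(S) = sum over unordered pairs {u,v} \<subseteq> S, u \<noteq> v, of d(u,v);
   each unordered pair appears twice among ordered pairs, hence the 1/2 *)
definition dsum :: "('a \<Rightarrow> 'a \<Rightarrow> real) \<Rightarrow> 'a set \<Rightarrow> real" where
  "dsum d S = (\<Sum>(u,v)\<in>{(u,v). u \<in> S \<and> v \<in> S \<and> u \<noteq> v}. d u v) / 2"

definition monotone_on_subsets :: "'a set \<Rightarrow> ('a set \<Rightarrow> real) \<Rightarrow> bool" where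
  "monotone_on_subsets U f \<longleftrightarrow> (\<forall>S T. S \<subseteq> T \<and> T \<subseteq> U \<longrightarrow> f S \<le> f T)"

definition submodular_on_subsets :: "'a set \<Rightarrow> ('a set \<Rightarrow> real) \<Rightarrow> bool" where
  "submodular_on_subsets U f \<longleftrightarrow> (\<forall>S T u. S \<subseteq> T \<and> T \<subseteq> U \<and> u \<in> U \<and> u \<notin> T \<longrightarrow>
      f (insert u S) - f S \<ge> f (insert u T) - f T)"

definition phi :: "('a set \<Rightarrow> real) \<Rightarrow> real \<Rightarrow> ('a \<Rightarrow> 'a \<Rightarrow> real) \<Rightarrow> 'a set \<Rightarrow> real" where
  "phi f lam d S = f S + lam * dsum d S"

definition phi' :: "('a set \<Rightarrow> real) \<Rightarrow> real \<Rightarrow> ('a \<Rightarrow> 'a \<Rightarrow> real) \<Rightarrow> 'a set \<Rightarrow> 'a \<Rightarrow> real" where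
  "phi' f lam d S u = (f (insert u S) - f S) / 2 + lam * (\<Sum>v\<in>S. d u v)"

(* xs is a possible run of the greedy algorithm (any tie-breaking): the k-th picked
   element lies in U minus the current set and maximizes phi' over it *)
definition greedy_run :: "'a set \<Rightarrow> nat \<Rightarrow> ('a set \<Rightarrow> real) \<Rightarrow> real \<Rightarrow> ('a \<Rightarrow> 'a \<Rightarrow> real) \<Rightarrow> 'a list \<Rightarrow> bool" where
  "greedy_run U p f lam d xs \<longleftrightarrow> length xs = p \<and>
     (\<forall>k<p. xs ! k \<in> U - set (take k xs) \<and>
        (\<forall>w\<in>U - set (take k xs). phi' f lam d (set (take k xs)) w \<le> phi' f lam d (set (take k xs)) (xs ! k)))"

end

theory Submission
  imports Defs
begin


lemma arith_core:
  fixes a b c al P Q AB BC :: real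
  assumes "a \<ge> 0" "b \<ge> 0" "c \<ge> 0" "c < b" "al \<ge> 1"
    "P \<ge> 0" "Q \<ge> 0" "AB \<ge> 0" "BC \<ge> 0"
    and L3: "b * P \<le> 2 * al * (a - 1) * AB"
    and L2: "a * Q \<le> 2 * al * (b - 1) * AB"
    and L1: "c * Q \<le> 2 * al * (b - 1) * BC"
    and p2: "a + b \<ge> 2"
  shows "(a + c) * b * (P + 2 * AB + Q) \<le> 2 * al * (a + b) * (a + b - 1) * (AB + BC)"
proof -
  define p where "p = a + b"
  define i where "i = a + c"
  have ip: "i < p" "i \<ge> 0" using assms by (auto simp: p_def i_def)
  have s1: "i * b * P \<le> 2 * al * i * (a - 1) * AB"
    using mult_left_mono[OF L3 ip(2)] by (simp add: algebra_simps)
  have s2: "2 * i * b * AB \<le> 2 * al * i * b * AB"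
    using assms ip by (simp add: mult_right_mono mult_left_mono)
  have c1: "(p - 1) * (p - i) \<ge> 0" using ip p2 by (simp add: p_def)
  have c2: "p * (p - 1) \<ge> 0" using p2 by (simp add: p_def)
  have s3a: "(p - 1) * (p - i) * (a * Q) \<le> (p - 1) * (p - i) * (2 * al * (b - 1) * AB)"
    using mult_left_mono[OF L2 c1] .
  have s3b: "p * (p - 1) * (c * Q) \<le> p * (p - 1) * (2 * al * (b - 1) * BC)"
    using mult_left_mono[OF L1 c2] .
  have id: "(p - 1) * (p - i) * (a * Q) + p * (p - 1) * (c * Q) = (p - 1) * (b * i * Q)"
    by (simp add: p_def i_def algebra_simps)
  have X0: "0 \<le> (p - 1) * (p - i) * AB + p * (p - 1) * BC"
    using c1 c2 assms by simp
  have s3: "(p - 1) * (b * i * Q) \<le> 2 * al * (b - 1) * ((p - 1) * (p - i) * AB + p * (p - 1) * BC)"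
    using s3a s3b id by (simp add: algebra_simps)
  also have "\<dots> \<le> 2 * al * (p - 1) * ((p - 1) * (p - i) * AB + p * (p - 1) * BC)"
    using X0 assms by (intro mult_right_mono mult_left_mono) (auto simp: p_def)
  finally have s3': "b * i * Q \<le> 2 * al * ((p - 1) * (p - i) * AB + p * (p - 1) * BC)"
    using p2 by (simp add: p_def mult.assoc mult.left_commute[of "a+b-1"])
  have "i * b * (P + 2 * AB + Q) = i * b * P + 2 * i * b * AB + b * i * Q"
    by (simp add: algebra_simps)
  also have "\<dots> \<le> 2 * al * i * (a - 1) * AB + 2 * al * i * b * AB
      + 2 * al * ((p - 1) * (p - i) * AB + p * (p - 1) * BC)"
    using s1 s2 s3' by linarith
  also have "\<dots> = 2 * al * p * (p - 1) * (AB + BC)"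
    by (simp add: p_def i_def algebra_simps)
  finally show ?thesis by (simp add: p_def i_def)
qed



definition SS :: "('a \<Rightarrow> 'a \<Rightarrow> real) \<Rightarrow> 'a set \<Rightarrow> 'a set \<Rightarrow> real" where
  "SS d X Y = (\<Sum>x\<in>X. \<Sum>y\<in>Y. d x y)"

context
  fixes al :: real and U :: "'a set" and d :: "'a \<Rightarrow> 'a \<Rightarrow> real"
  assumes rs: "relaxed_semimetric al U d"
begin

lemma rs_sym: "u \<in> U \<Longrightarrow> v \<in> U \<Longrightarrow> d u v = d v u"
  using rs unfolding relaxed_semimetric_def by blast
lemma rs_nn: "u \<in> U \<Longrightarrow> v \<in> U \<Longrightarrow> d u v \<ge> 0"
  using rs unfolding relaxed_semimetric_def by blast
lemma rs_0: "u \<in> U \<Longrightarrow> d u u = 0"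
  using rs unfolding relaxed_semimetric_def by blast
lemma rs_al: "al \<ge> 1"
  using rs unfolding relaxed_semimetric_def by blast
lemma rs_tri: "u \<in> U \<Longrightarrow> v \<in> U \<Longrightarrow> w \<in> U \<Longrightarrow> d u v \<le> al * (d v w + d w u)"
  using rs unfolding relaxed_semimetric_def by blast

lemma SS_nn: "X \<subseteq> U \<Longrightarrow> Y \<subseteq> U \<Longrightarrow> SS d X Y \<ge> 0"
  unfolding SS_def by (intro sum_nonneg) (auto intro!: rs_nn)

lemma SS_swap: "X \<subseteq> U \<Longrightarrow> Y \<subseteq> U \<Longrightarrow> SS d X Y = SS d Y X"
  unfolding SS_def
  by (subst sum.swap) (intro sum.cong refl, auto intro: rs_sym)

lemma SS_union1: "finite X \<Longrightarrow> finite Y \<Longrightarrow> X \<inter> Y = {} \<Longrightarrow> SS d (X \<union> Y) Z = SS d X Z + SS d Y Z"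
  unfolding SS_def by (rule sum.union_disjoint)

lemma SS_union2: "finite Y \<Longrightarrow> finite Z \<Longrightarrow> Y \<inter> Z = {} \<Longrightarrow> SS d X (Y \<union> Z) = SS d X Y + SS d X Z"
  unfolding SS_def by (simp add: sum.union_disjoint sum.distrib)

lemma dsum_SS:
  assumes "finite S" "S \<subseteq> U"
  shows "dsum d S = SS d S S / 2"
proof -
  have "(\<Sum>(u,v)\<in>{(u,v). u \<in> S \<and> v \<in> S \<and> u \<noteq> v}. d u v) = (\<Sum>(u,v)\<in>S \<times> S. d u v)"
    using assms by (intro sum.mono_neutral_left) (auto intro: rs_0)
  also have "\<dots> = SS d S S" unfolding SS_def by (simp add: sum.cartesian_product)
  finally show ?thesis unfolding dsum_def by simp
qed

lemma tri_sum:
  assumes "finite X" "X \<subseteq> U" "y \<in> U"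
  shows "SS d X X \<le> 2 * al * (real (card X) - 1) * (\<Sum>x\<in>X. d x y)"
proof -
  have "SS d X X = (\<Sum>u\<in>X. \<Sum>w\<in>X - {u}. d u w)"
    unfolding SS_def
  proof (rule sum.cong[OF refl])
    fix u assume u: "u \<in> X"
    show "(\<Sum>w\<in>X. d u w) = (\<Sum>w\<in>X - {u}. d u w)"
      using u assms by (subst sum.remove[of X u]) (auto simp: rs_0)
  qed
  also have "\<dots> \<le> (\<Sum>u\<in>X. \<Sum>w\<in>X - {u}. al * (d w y + d y u))"
    using assms by (intro sum_mono) (auto intro!: rs_tri)
  also have "\<dots> = al * ((\<Sum>u\<in>X. \<Sum>w\<in>X - {u}. d w y) + (\<Sum>u\<in>X. \<Sum>w\<in>X - {u}. d y u))"
    by (simp only: sum.distrib distrib_left sum_distrib_left)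
  also have "(\<Sum>u\<in>X. \<Sum>w\<in>X - {u}. d y u) = (real (card X) - 1) * (\<Sum>x\<in>X. d x y)"
  proof -
    have "(\<Sum>u\<in>X. \<Sum>w\<in>X - {u}. d y u) = (\<Sum>u\<in>X. (real (card X) - 1) * d u y)"
    proof (rule sum.cong[OF refl])
      fix u assume u: "u \<in> X"
      then have "card X \<ge> 1" using assms(1) by (metis One_nat_def Suc_leI card_gt_0_iff empty_iff)
      then show "(\<Sum>w\<in>X - {u}. d y u) = (real (card X) - 1) * d u y"
        using u assms by (simp add: card_Diff_singleton rs_sym subset_iff of_nat_diff)
    qed
    then show ?thesis by (simp add: sum_distrib_left)
  qed
  also have "(\<Sum>u\<in>X. \<Sum>w\<in>X - {u}. d w y) = (real (card X) - 1) * (\<Sum>x\<in>X. d x y)"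
  proof -
    have "(\<Sum>u\<in>X. \<Sum>w\<in>X - {u}. d w y) = (\<Sum>u\<in>X. (\<Sum>w\<in>X. d w y) - d u y)"
      using assms by (intro sum.cong refl) (simp add: sum_diff1)
    also have "\<dots> = real (card X) * (\<Sum>w\<in>X. d w y) - (\<Sum>u\<in>X. d u y)"
      by (simp add: sum_subtractf)
    finally show ?thesis by (simp add: algebra_simps)
  qed
  finally show ?thesis by (simp add: algebra_simps)
qed

lemma tri_SS:
  assumes "finite X" "X \<subseteq> U" "finite Y" "Y \<subseteq> U"
  shows "real (card Y) * SS d X X \<le> 2 * al * (real (card X) - 1) * SS d X Y"
proof -
  have "real (card Y) * SS d X X = (\<Sum>y\<in>Y. SS d X X)" by simp
  also have "\<dots> \<le> (\<Sum>y\<in>Y. 2 * al * (real (card X) - 1) * (\<Sum>x\<in>X. d x y))"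
    using assms by (intro sum_mono tri_sum) auto
  also have "\<dots> = 2 * al * (real (card X) - 1) * SS d X Y"
    unfolding SS_def by (simp add: sum_distrib_left sum.swap[of _ Y])
  finally show ?thesis .
qed


lemma comb:
  assumes "finite Om" "Om \<subseteq> U" "finite G" "G \<subseteq> U" "card G < card Om"
  shows "real (card G) * real (card (Om - G)) * SS d Om Om
     \<le> 2 * al * real (card Om) * (real (card Om) - 1) * SS d (Om - G) G"
proof -
  define A where "A = Om \<inter> G"
  define B where "B = Om - G"
  define C where "C = G - Om"
  have fin: "finite A" "finite B" "finite C" using assms by (auto simp: A_def B_def C_def)
  have sub: "A \<subseteq> U" "B \<subseteq> U" "C \<subseteq> U" using assms by (auto simp: A_def B_def C_def)
  have Om: "Om = A \<union> B" "A \<inter> B = {}" by (auto simp: A_def B_def)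
  have G: "G = A \<union> C" "A \<inter> C = {}" by (auto simp: A_def C_def)
  have cO: "card Om = card A + card B" using Om fin by (simp add: card_Un_disjoint)
  have cG: "card G = card A + card C" using G fin by (simp add: card_Un_disjoint)
  have SOO: "SS d Om Om = SS d A A + 2 * SS d A B + SS d B B"
    using Om fin sub by (simp add: SS_union1 SS_union2 SS_swap[of B A])
  have SBG: "SS d (Om - G) G = SS d A B + SS d B C"
  proof -
    have "SS d (Om - G) G = SS d B (A \<union> C)" using G B_def by simp
    also have "\<dots> = SS d B A + SS d B C" using G fin by (simp add: SS_union2)
    finally show ?thesis using SS_swap[of B A] sub by simp
  qed
  show ?thesis
  proof (cases "card Om \<ge> 2")
    case False
    then have "card G = 0" using assms(5) by linarith
    moreover have "card Om = 1" using assms(5) False by linarith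
    ultimately show ?thesis by simp
  next
    case True
    have L3: "real (card B) * SS d A A \<le> 2 * al * (real (card A) - 1) * SS d A B"
      using tri_SS fin sub by blast
    have L2: "real (card A) * SS d B B \<le> 2 * al * (real (card B) - 1) * SS d A B"
      using tri_SS[of B A] fin sub SS_swap[of B A] by simp
    have L1: "real (card C) * SS d B B \<le> 2 * al * (real (card B) - 1) * SS d B C"
      using tri_SS fin sub by blast
    have "(real (card A) + real (card C)) * real (card B) * (SS d A A + 2 * SS d A B + SS d B B)
      \<le> 2 * al * (real (card A) + real (card B)) * (real (card A) + real (card B) - 1) * (SS d A B + SS d B C)"
      apply (rule arith_core[OF _ _ _ _ rs_al _ _ _ _ L3 L2 L1])
      using assms(5) cO cG True SS_nn sub by auto
    then show ?thesis using cO cG SOO SBG B_def by simp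
  qed
qed


lemma SS_insert:
  assumes "finite S" "S \<subseteq> U" "u \<in> U" "u \<notin> S"
  shows "SS d (insert u S) (insert u S) = SS d S S + 2 * (\<Sum>v\<in>S. d u v)"
proof -
  have "SS d (insert u S) (insert u S) = (\<Sum>y\<in>insert u S. d u y) + SS d S (insert u S)"
    unfolding SS_def using assms by simp
  also have "(\<Sum>y\<in>insert u S. d u y) = (\<Sum>v\<in>S. d u v)"
    using assms by (simp add: rs_0)
  also have "SS d S (insert u S) = SS d S {u} + SS d S S"
    using SS_union2[of "{u}" S S] assms by (simp add: add.commute)
  also have "SS d S {u} = (\<Sum>v\<in>S. d u v)"
    unfolding SS_def using assms by (intro sum.cong refl) (auto simp: rs_sym subset_iff)
  finally show ?thesis by simp
qed

lemma dsum_insert: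
  assumes "finite S" "S \<subseteq> U" "u \<in> U" "u \<notin> S"
  shows "dsum d (insert u S) = dsum d S + (\<Sum>v\<in>S. d u v)"
  using assms by (simp add: dsum_SS SS_insert)

end

lemma submod_sum:
  assumes sm: "submodular_on_subsets U f" and "finite B" "B \<inter> G = {}" "B \<subseteq> U" "G \<subseteq> U"
  shows "f (G \<union> B) - f G \<le> (\<Sum>v\<in>B. f (insert v G) - f G)"
  using assms(2-4)
proof (induction B rule: finite_induct)
  case empty
  then show ?case by simp
next
  case (insert x B)
  have "f (insert x (G \<union> B)) - f (G \<union> B) \<le> f (insert x G) - f G"
  proof -
    have h: "G \<subseteq> G \<union> B \<and> G \<union> B \<subseteq> U \<and> x \<in> U \<and> x \<notin> G \<union> B"
      using insert assms(5) by auto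
    show ?thesis using sm[unfolded submodular_on_subsets_def, rule_format, OF h] by simp
  qed
  then show ?case using insert by simp
qed

lemma gen_lin: "(a - b) / 2 + x \<le> (b - c) / 2 + y \<Longrightarrow> 0 \<le> (c::real) \<Longrightarrow> a / 2 + x \<le> b + y"
  by (simp add: field_simps)

lemma sum_real_lessThan: "(\<Sum>k<p. real k) * 2 = real p * (real p - 1)"
  by (induction p) (auto simp: algebra_simps)

theorem theorem1:
  fixes U :: "'a set" and p :: nat and lam \<alpha> :: real
    and d :: "'a \<Rightarrow> 'a \<Rightarrow> real" and f :: "'a set \<Rightarrow> real"
    and xs :: "'a list" and Opt :: "'a set"
  assumes "finite U" and "0 < p" and "p \<le> card U" and "lam \<ge> 0"
    and "relaxed_semimetric \<alpha> U d"
    and "\<forall>S\<subseteq>U. f S \<ge> 0"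
    and "monotone_on_subsets U f" and "submodular_on_subsets U f"
    and "greedy_run U p f lam d xs"
    and "Opt \<subseteq> U" and "card Opt = p"
    and "\<forall>S. S \<subseteq> U \<and> card S = p \<longrightarrow> phi f lam d S \<le> phi f lam d Opt"
  shows "phi f lam d (set xs) \<ge> phi f lam d Opt / (2 * \<alpha>)"
proof -
  note rs = assms(5)
  have al1: "\<alpha> \<ge> 1" using rs_al[OF rs] .
  define Gk where "Gk k = set (take k xs)" for k
  have len: "length xs = p" using assms(9) unfolding greedy_run_def by blast
  have gr: "\<And>k. k < p \<Longrightarrow> xs ! k \<in> U - Gk k \<and>
        (\<forall>w\<in>U - Gk k. phi' f lam d (Gk k) w \<le> phi' f lam d (Gk k) (xs ! k))"
    using assms(9) unfolding greedy_run_def Gk_def by blast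
  have Gsuc: "\<And>k. k < p \<Longrightarrow> Gk (Suc k) = insert (xs ! k) (Gk k)"
    unfolding Gk_def using len by (simp add: take_Suc_conv_app_nth)
  have Gfin: "\<And>k. finite (Gk k)" unfolding Gk_def by simp
  have Gsub: "k \<le> p \<Longrightarrow> Gk k \<subseteq> U" for k
  proof (induction k)
    case 0 then show ?case by (simp add: Gk_def)
  next
    case (Suc k) then show ?case using Gsuc[of k] gr[of k] by auto
  qed
  have Gcard: "k \<le> p \<Longrightarrow> card (Gk k) = k" for k
  proof (induction k)
    case 0 then show ?case by (simp add: Gk_def)
  next
    case (Suc k) then show ?case using Gsuc[of k] gr[of k] Gfin[of k] by auto
  qed
  have Gp: "Gk p = set xs" unfolding Gk_def using len by simp
  have Gle: "\<And>k. Gk k \<subseteq> set xs" unfolding Gk_def by (rule set_take_subset)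
  have xsU: "set xs \<subseteq> U" using Gsub[of p] Gp by simp
  have finO: "finite Opt" using assms(1,10) finite_subset by blast
  define F where "F k = f (Gk k)" for k
  define D where "D k = dsum d (Gk k)" for k
  define s where "s k = phi' f lam d (Gk k) (xs ! k)" for k
  define dO where "dO = dsum d Opt"
  have mono: "\<And>S T. S \<subseteq> T \<Longrightarrow> T \<subseteq> U \<Longrightarrow> f S \<le> f T"
    using assms(7) unfolding monotone_on_subsets_def by blast
  have s_eq: "s k = (F (Suc k) - F k) / 2 + lam * (D (Suc k) - D k)" if k: "k < p" for k
  proof -
    have "D (Suc k) = D k + (\<Sum>v\<in>Gk k. d (xs ! k) v)"
      unfolding D_def using Gsuc[OF k] gr[OF k] Gsub[of k] k Gfin[of k]
      by (simp add: dsum_insert[OF rs])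
    then show ?thesis unfolding s_def phi'_def F_def using Gsuc[OF k] by simp
  qed
  have tele: "(\<Sum>k<p. s k) = (F p - F 0) / 2 + lam * (D p - D 0)"
  proof -
    have "(\<Sum>k<p. s k) = (\<Sum>k<p. (F (Suc k) - F k) / 2 + lam * (D (Suc k) - D k))"
      using s_eq by simp
    also have "\<dots> = (\<Sum>k<p. F (Suc k) - F k) / 2 + lam * (\<Sum>k<p. D (Suc k) - D k)"
      by (simp add: sum.distrib sum_distrib_left sum_divide_distrib)
    finally show ?thesis by (simp add: sum_lessThan_telescope)
  qed
  have D0: "D 0 = 0" unfolding D_def Gk_def dsum_def by simp
  have F0: "F 0 \<ge> 0" unfolding F_def Gk_def using assms(6) by simp
  have Fp: "F k \<le> F p" if "k \<le> p" for k
    unfolding F_def using Gle[of k] Gp xsU by (intro mono) auto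
  have step: "s k \<ge> (f Opt - F p) / (2 * p) + lam * (k * dO / (\<alpha> * p * (p - 1)))"
    if k: "k < p" for k
  proof -
    define G where "G = Gk k"
    define B where "B = Opt - G"
    have GU: "G \<subseteq> U" using Gsub k G_def by simp
    have cG: "card G = k" using Gcard k G_def by simp
    have finB: "finite B" using finO B_def by simp
    have BU: "B \<subseteq> U - G" using assms(10) B_def by auto
    have bpos: "card B \<ge> 1"
    proof -
      have "card Opt \<le> card (G \<union> B)" using B_def finB Gfin G_def by (intro card_mono) auto
      also have "\<dots> \<le> card G + card B" by (rule card_Un_le)
      finally show ?thesis using cG k assms(11) by linarith
    qed
    have bp: "card B \<le> p" using assms(11) finO B_def card_mono[of Opt B] by auto
    have le: "\<forall>v\<in>B. phi' f lam d G v \<le> s k" using gr[OF k] BU unfolding s_def G_def by blast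
    have "(\<Sum>v\<in>B. phi' f lam d G v) \<le> real (card B) * s k"
      using sum_mono[of B _ "\<lambda>_. s k"] le by simp
    moreover have "(\<Sum>v\<in>B. phi' f lam d G v)
        = (\<Sum>v\<in>B. f (insert v G) - f G) / 2 + lam * SS d B G"
      unfolding phi'_def SS_def by (simp add: sum.distrib sum_distrib_left sum_divide_distrib)
    ultimately have main: "(\<Sum>v\<in>B. f (insert v G) - f G) / 2 + lam * SS d B G \<le> real (card B) * s k"
      by simp
    define Mf where "Mf = (\<Sum>v\<in>B. f (insert v G) - f G)"
    have Mf0: "Mf \<ge> 0" unfolding Mf_def using BU GU
      by (intro sum_nonneg) (auto intro!: mono)
    have Mf1: "Mf \<ge> f Opt - F p"
    proof -
      have "f Opt \<le> f (G \<union> B)" using B_def GU assms(10) by (intro mono) auto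
      also have "f (G \<union> B) - f G \<le> Mf"
        unfolding Mf_def using submod_sum[OF assms(8) finB _ _ GU] BU by auto
      then have "f (G \<union> B) \<le> Mf + F k" unfolding F_def G_def by simp
      finally show ?thesis using Fp[of k] k by simp
    qed
    have t1: "(f Opt - F p) / (2 * p) \<le> Mf / (2 * card B)"
    proof (cases "f Opt - F p \<le> 0")
      case True
      have "(f Opt - F p) / (2 * p) \<le> 0" using True assms(2) by (simp add: divide_nonpos_pos)
      moreover have "0 \<le> Mf / (2 * card B)" using Mf0 by simp
      ultimately show ?thesis by linarith
    next
      case False
      have h1: "real (2 * card B) \<le> real (2 * p)" using bp by simp
      have h2: "0 < real (2 * p) * real (2 * card B)" using bpos assms(2) by simp
      have "(f Opt - F p) / real (2 * p) \<le> (f Opt - F p) / real (2 * card B)"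
        by (rule divide_left_mono[OF h1 _ h2]) (use False in simp)
      also have "\<dots> \<le> Mf / real (2 * card B)"
        by (rule divide_right_mono) (use Mf1 in simp_all)
      finally show ?thesis by simp
    qed
    have SSnn: "SS d B G \<ge> 0" using SS_nn[OF rs] BU GU by auto
    have t2: "k * dO / (\<alpha> * p * (p - 1)) \<le> SS d B G / card B"
    proof (cases "p = 1")
      case True then show ?thesis using k SSnn by simp
    next
      case False
      have c: "real k * real (card B) * SS d Opt Opt
          \<le> 2 * \<alpha> * real p * (real p - 1) * SS d B G"
        using comb[OF rs finO assms(10) Gfin[of k] GU[unfolded G_def]] cG k assms(11)
        unfolding B_def G_def by simp
      have dO2: "dO = SS d Opt Opt / 2" unfolding dO_def using dsum_SS[OF rs finO assms(10)] .
      have pos: "\<alpha> * p * (p - 1) > 0" using False assms(2) al1 by simp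
      have pm: "real (p - 1) = real p - 1" using assms(2) by (simp add: of_nat_diff)
      have "real k * real (card B) * dO = (real k * real (card B) * SS d Opt Opt) / 2"
        using dO2 by simp
      also have "\<dots> \<le> (2 * \<alpha> * real p * (real p - 1) * SS d B G) / 2"
        using c by (rule divide_right_mono) simp
      finally have e: "real k * real (card B) * dO \<le> SS d B G * (\<alpha> * real p * real (p - 1))"
        unfolding pm by (simp add: algebra_simps)
      have pos': "\<alpha> * real p * real (p - 1) > 0" using pos by linarith
      have bpos': "real (card B) > 0" using bpos by simp
      define Y where "Y = \<alpha> * real p * real (p - 1)"
      have e': "(real k * dO) * real (card B) \<le> SS d B G * Y" using e unfolding Y_def by (simp only: mult_ac)
      have "real k * dO / Y \<le> SS d B G / real (card B)"
      proof -
        have Yp: "Y > 0" using pos' unfolding Y_def .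
        have "real k * dO / Y = (real k * dO * real (card B)) / (Y * real (card B))"
          using bpos' by simp
        also have "\<dots> \<le> (SS d B G * Y) / (Y * real (card B))"
          by (rule divide_right_mono[OF e']) (use Yp bpos' in simp)
        also have "\<dots> = SS d B G / real (card B)" using Yp by simp
        finally show ?thesis .
      qed
      then show ?thesis unfolding Y_def by simp
    qed
    have "(f Opt - F p) / (2 * p) + lam * (k * dO / (\<alpha> * p * (p - 1)))
        \<le> Mf / (2 * card B) + lam * (SS d B G / card B)"
      using t1 t2 assms(4) by (intro add_mono mult_left_mono) auto
    also have "\<dots> = (Mf / 2 + lam * SS d B G) / card B" using bpos by (simp add: field_simps)
    also have "\<dots> \<le> s k"
    proof -
      have bp': "real (card B) > 0" using bpos by simp
      show ?thesis using main bp' unfolding Mf_def[symmetric] by (simp add: pos_divide_le_eq mult.commute)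
    qed
    finally show ?thesis .
  qed
  have sumstep: "(\<Sum>k<p. s k) \<ge> (f Opt - F p) / 2 + lam * (dO / (2 * \<alpha>))"
  proof -
    have "(\<Sum>k<p. (f Opt - F p) / (2 * p) + lam * (k * dO / (\<alpha> * p * (p - 1)))) \<le> (\<Sum>k<p. s k)"
      using step by (intro sum_mono) auto
    moreover have "(\<Sum>k<p. (f Opt - F p) / (2 * p) + lam * (k * dO / (\<alpha> * p * (p - 1))))
        = (f Opt - F p) / 2 + lam * (dO / (2 * \<alpha>))"
    proof (cases "p = 1")
      case True
      then obtain z where "Opt = {z}" using assms(11) card_1_singletonE by blast
      then have E0: "{(u, v). u \<in> Opt \<and> v \<in> Opt \<and> u \<noteq> v} = {}" by auto
      have "dO = 0" unfolding dO_def dsum_def E0 by simp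
      then show ?thesis using True by simp
    next
      case False
      define Y where "Y = \<alpha> * real p * real (p - 1)"
      define c1 where "c1 = (f Opt - F p) / (2 * p)"
      have "(\<Sum>k<p. (f Opt - F p) / (2 * p) + lam * (k * dO / (\<alpha> * p * (p - 1))))
          = (\<Sum>k<p. c1 + (lam * dO / Y) * real k)"
        unfolding Y_def c1_def by (intro sum.cong refl) simp
      also have "\<dots> = real p * c1 + (lam * dO / Y) * (\<Sum>k<p. real k)"
        by (simp add: sum.distrib sum_distrib_left)
      also have "(\<Sum>k<p. real k) = real p * (real p - 1) / 2" using sum_real_lessThan[of p] by simp
      also have "real p * c1 = (f Opt - F p) / 2" unfolding c1_def using assms(2) by simp
      also have "lam * dO / Y * (real p * (real p - 1) / 2) = lam * (dO / (2 * \<alpha>))"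
        unfolding Y_def using False assms(2) al1 by (simp add: of_nat_diff field_simps)
      finally show ?thesis .
    qed
    ultimately show ?thesis by simp
  qed
  have "(F p - F 0) / 2 + lam * D p \<ge> (f Opt - F p) / 2 + lam * (dO / (2 * \<alpha>))"
    using sumstep tele D0 by simp
  then have A: "F p + lam * D p \<ge> f Opt / 2 + lam * (dO / (2 * \<alpha>))" using F0
    by (rule gen_lin)
  have fO: "f Opt \<ge> 0" using assms(6,10) by simp
  have "f Opt / (2 * \<alpha>) \<le> f Opt / 2" using fO al1 by (intro divide_left_mono) auto
  then have "phi f lam d Opt / (2 * \<alpha>) \<le> f Opt / 2 + lam * (dO / (2 * \<alpha>))"
    unfolding phi_def dO_def by (simp add: add_divide_distrib)
  also have "\<dots> \<le> phi f lam d (set xs)"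
    using A unfolding phi_def F_def D_def Gp by simp
  finally show ?thesis .
qed

end
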